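(* Let $G$ be a graph of order $n$, vertex connectivity $\kappa$ and independence number $\alpha$. If $\kappa+\alpha=n$, then $$\operatorname{th}_{\operatorname{H}}(G)=\lceil 2\sqrt{n-\kappa}+\kappa-1\rceil=\lceil n-\alpha+2\sqrt{\alpha}-1\rceil.$$
   Context: All graphs are finite, simple and undirected. Hopping color change rule: a blue vertex $v$ may force a white vertex $w$ to become blue if $v$ has not previously performed a force and every neighbor of $v$ is blue. For an initial blue set $B$, a chronological list of forces of $B$ is a sequence of such forces applied one at a time until no further force is possible; its underlying unordered set is a set of forces of $B$. $B$ is a hopping forcing set if some chronological list of forces of $B$ turns all vertices blue. For a set of forces $\mathcal F$ of $B$, let $\mathcal F^{(0)}=B$ and for $t\geq1$ let $\mathcal F^{(t)}$ be the set of vertices $w\notin U_{t-1}:=\bigcup_{i=0}^{t-1}\mathcal F^{(i)}$ for which there is $(v\to w)\in\mathcal F$ with $v\in U_{t-1}$ and all neighbors of $v$ in $U_{t-1}$. $\operatorname{pt}_{\operatorname{H}}(G;\mathcal F)$ is the least $t$ with $\bigcup_{i=0}^t\mathcal F^{(i)}=V(G)$ ($\infty$ if none); $\operatorname{pt}_{\operatorname{H}}(G;B)$ is the minimum of $\operatorname{pt}_{\operatorname{H}}(G;\mathcal F)$ over sets of forces $\mathcal F$ of $B$ ($\infty$ if $B$ is not a hopping forcing set). $\operatorname{th}_{\operatorname{H}}(G)=\min_{B\subseteq V(G)}\big(|B|+\operatorname{pt}_{\operatorname{H}}(G;B)\big)$. *)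

theory Defs
  imports Complex_Main "HOL-Library.Extended_Nat"
begin

definition simple_graph :: "'a set \<Rightarrow> ('a \<Rightarrow> 'a \<Rightarrow> bool) \<Rightarrow> bool" where
  "simple_graph V E \<longleftrightarrow> finite V \<and> V \<noteq> {} \<and>
     (\<forall>a b. E a b \<longrightarrow> E b a) \<and> (\<forall>a. \<not> E a a) \<and>
     (\<forall>a b. E a b \<longrightarrow> a \<in> V \<and> b \<in> V)"

definition connected_on :: "('a \<Rightarrow> 'a \<Rightarrow> bool) \<Rightarrow> 'a set \<Rightarrow> bool" where
  "connected_on E X \<longleftrightarrow>
     (\<forall>x\<in>X. \<forall>y\<in>X. (\<lambda>a b. E a b \<and> a \<in> X \<and> b \<in> X)\<^sup>*\<^sup>* x y)"

definition vertex_connectivity :: "'a set \<Rightarrow> ('a \<Rightarrow> 'a \<Rightarrow> bool) \<Rightarrow> nat" where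
  "vertex_connectivity V E =
     Min {card S | S. S \<subseteq> V \<and> (\<not> connected_on E (V - S) \<or> card (V - S) \<le> 1)}"

definition independent_set :: "'a set \<Rightarrow> ('a \<Rightarrow> 'a \<Rightarrow> bool) \<Rightarrow> 'a set \<Rightarrow> bool" where
  "independent_set V E I \<longleftrightarrow> I \<subseteq> V \<and> (\<forall>a\<in>I. \<forall>b\<in>I. \<not> E a b)"

definition independence_number :: "'a set \<Rightarrow> ('a \<Rightarrow> 'a \<Rightarrow> bool) \<Rightarrow> nat" where
  "independence_number V E = Max {card I | I. independent_set V E I}"

text \<open>Hopping color change rule: with blue set S and set of vertices that have
already forced, v may force w.\<close>
definition hop_can_force ::
  "'a set \<Rightarrow> ('a \<Rightarrow> 'a \<Rightarrow> bool) \<Rightarrow> 'a set \<Rightarrow> 'a set \<Rightarrow> 'a \<Rightarrow> 'a \<Rightarrow> bool" where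
  "hop_can_force V E S used v w \<longleftrightarrow>
     v \<in> S \<and> v \<notin> used \<and> (\<forall>u. E v u \<longrightarrow> u \<in> S) \<and> w \<in> V \<and> w \<notin> S"

fun hop_chron ::
  "'a set \<Rightarrow> ('a \<Rightarrow> 'a \<Rightarrow> bool) \<Rightarrow> 'a set \<Rightarrow> 'a set \<Rightarrow> ('a \<times> 'a) list \<Rightarrow> bool" where
  "hop_chron V E S used [] \<longleftrightarrow> \<not> (\<exists>v w. hop_can_force V E S used v w)"
| "hop_chron V E S used ((v, w) # fs) \<longleftrightarrow>
     hop_can_force V E S used v w \<and> hop_chron V E (insert w S) (insert v used) fs"

definition chron_list_of_forces ::
  "'a set \<Rightarrow> ('a \<Rightarrow> 'a \<Rightarrow> bool) \<Rightarrow> 'a set \<Rightarrow> ('a \<times> 'a) list \<Rightarrow> bool" where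
  "chron_list_of_forces V E B fs \<longleftrightarrow> hop_chron V E B {} fs"

definition set_of_forces ::
  "'a set \<Rightarrow> ('a \<Rightarrow> 'a \<Rightarrow> bool) \<Rightarrow> 'a set \<Rightarrow> ('a \<times> 'a) set \<Rightarrow> bool" where
  "set_of_forces V E B F \<longleftrightarrow> (\<exists>fs. chron_list_of_forces V E B fs \<and> F = set fs)"

definition hopping_forcing_set :: "'a set \<Rightarrow> ('a \<Rightarrow> 'a \<Rightarrow> bool) \<Rightarrow> 'a set \<Rightarrow> bool" where
  "hopping_forcing_set V E B \<longleftrightarrow> B \<subseteq> V \<and>
     (\<exists>fs. chron_list_of_forces V E B fs \<and> B \<union> snd ` set fs = V)"

text \<open>Cumulative blue set after t rounds: U_t = F^(0) \<union> ... \<union> F^(t).\<close>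
fun hop_rounds ::
  "('a \<Rightarrow> 'a \<Rightarrow> bool) \<Rightarrow> 'a set \<Rightarrow> ('a \<times> 'a) set \<Rightarrow> nat \<Rightarrow> 'a set" where
  "hop_rounds E B F 0 = B"
| "hop_rounds E B F (Suc t) = hop_rounds E B F t \<union>
     {w. w \<notin> hop_rounds E B F t \<and>
         (\<exists>v. (v, w) \<in> F \<and> v \<in> hop_rounds E B F t \<and>
               (\<forall>u. E v u \<longrightarrow> u \<in> hop_rounds E B F t))}"

definition pt_H_forces ::
  "'a set \<Rightarrow> ('a \<Rightarrow> 'a \<Rightarrow> bool) \<Rightarrow> 'a set \<Rightarrow> ('a \<times> 'a) set \<Rightarrow> enat" where
  "pt_H_forces V E B F =
     (if \<exists>t. hop_rounds E B F t = V then enat (LEAST t. hop_rounds E B F t = V) else \<infinity>)"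

definition pt_H :: "'a set \<Rightarrow> ('a \<Rightarrow> 'a \<Rightarrow> bool) \<Rightarrow> 'a set \<Rightarrow> enat" where
  "pt_H V E B =
     (if hopping_forcing_set V E B
      then (INF F \<in> {F. set_of_forces V E B F}. pt_H_forces V E B F) else \<infinity>)"

definition th_H :: "'a set \<Rightarrow> ('a \<Rightarrow> 'a \<Rightarrow> bool) \<Rightarrow> enat" where
  "th_H V E = (INF B \<in> Pow V. enat (card B) + pt_H V E B)"

end

theory Submission
  imports Defs
begin

lemma hop_chron_props:
  "hop_chron V E S used fs \<Longrightarrow> (v,w) \<in> set fs \<Longrightarrow> v \<notin> used \<and> w \<in> V \<and> w \<notin> S"
  by (induction V E S used fs rule: hop_chron.induct) (auto simp: hop_can_force_def)

lemma hop_chron_fun: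
  "hop_chron V E S used fs \<Longrightarrow> (v,w) \<in> set fs \<Longrightarrow> (v,w') \<in> set fs \<Longrightarrow> w = w'"
proof (induction V E S used fs rule: hop_chron.induct)
  case (1 V E S used)
  then show ?case by simp
next
  case (2 V E S used v0 w0 fs)
  then show ?case using hop_chron_props[of V E "insert w0 S" "insert v0 used" fs]
    by auto
qed

lemma sof_props1:
  assumes "set_of_forces V E B F" "(v,w) \<in> F"
  shows "w \<in> V \<and> w \<notin> B"
proof -
  obtain fs where "hop_chron V E B {} fs" "F = set fs"
    using assms(1) unfolding set_of_forces_def chron_list_of_forces_def by blast
  then show ?thesis using hop_chron_props[of V E B "{}" fs v w] assms(2) by simp
qed

lemma sof_props2:
  assumes "set_of_forces V E B F" "(v,w) \<in> F" "(v,w') \<in> F"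
  shows "w = w'"
proof -
  obtain fs where "hop_chron V E B {} fs" "F = set fs"
    using assms(1) unfolding set_of_forces_def chron_list_of_forces_def by blast
  then show ?thesis using hop_chron_fun[of V E B "{}" fs v w w'] assms(2,3) by simp
qed

lemma rounds_mono: "s \<le> t \<Longrightarrow> hop_rounds E B F s \<subseteq> hop_rounds E B F t"
  by (rule lift_Suc_mono_le[of "hop_rounds E B F"]) auto

lemma B_sub: "B \<subseteq> hop_rounds E B F t" by (induction t) auto

lemma rounds_sub: "B \<subseteq> V \<Longrightarrow> (\<And>v w. (v,w)\<in>F \<Longrightarrow> w \<in> V) \<Longrightarrow> hop_rounds E B F t \<subseteq> V"
  by (induction t) auto

lemma forcer:
  "w \<in> hop_rounds E B F (Suc s) \<Longrightarrow> w \<notin> B \<Longrightarrow>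
   \<exists>v. (v,w)\<in>F \<and> v \<in> hop_rounds E B F s \<and> (\<forall>u. E v u \<longrightarrow> u \<in> hop_rounds E B F s)"
proof (induction s arbitrary: w)
  case 0
  then show ?case by auto
next
  case (Suc s)
  show ?case
  proof (cases "w \<in> hop_rounds E B F (Suc s)")
    case True
    then obtain v where "(v,w)\<in>F" "v \<in> hop_rounds E B F s" "\<forall>u. E v u \<longrightarrow> u \<in> hop_rounds E B F s"
      using Suc by blast
    moreover have "hop_rounds E B F s \<subseteq> hop_rounds E B F (Suc s)" by auto
    ultimately show ?thesis by blast
  next
    case False
    then show ?thesis using Suc.prems by auto
  qed
qed

lemma kappa_le:
  assumes "finite V" "S \<subseteq> V" "\<not> connected_on E (V - S) \<or> card (V - S) \<le> 1"
  shows "vertex_connectivity V E \<le> card S"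
proof -
  have "finite {card S | S. S \<subseteq> V \<and> (\<not> connected_on E (V - S) \<or> card (V - S) \<le> 1)}"
    using assms(1) by (rule finite_subset[rotated, OF finite_imageI[OF finite_Pow_iff[THEN iffD2]]]) auto
  then show ?thesis unfolding vertex_connectivity_def using assms by (intro Min_le) auto
qed

lemma step_bound:
  assumes fin: "finite V" and BV: "B \<subseteq> V"
    and P2: "\<And>v w. (v,w)\<in>F \<Longrightarrow> w \<in> V \<and> w \<notin> B"
    and P1: "\<And>v w w'. (v,w)\<in>F \<Longrightarrow> (v,w')\<in>F \<Longrightarrow> w = w'"
    and ne: "hop_rounds E B F s \<noteq> V"
  shows "card (hop_rounds E B F (Suc s)) \<le> card (hop_rounds E B F s) + (card B - vertex_connectivity V E)"
proof -
  define U where "U = hop_rounds E B F s"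
  define U' where "U' = hop_rounds E B F (Suc s)"
  have UV: "U \<subseteq> V" "U' \<subseteq> V" unfolding U_def U'_def using rounds_sub[OF BV] P2 by blast+
  have BU: "B \<subseteq> U" "B \<subseteq> U'" unfolding U_def U'_def by (rule B_sub)+
  have UU: "U \<subseteq> U'" unfolding U_def U'_def by (rule rounds_mono) simp
  have finU: "finite U" "finite U'" using UV fin finite_subset by blast+
  define X where "X = U' - B"
  define f where "f w = (SOME v. (v,w)\<in>F \<and> v \<in> U \<and> (\<forall>u. E v u \<longrightarrow> u \<in> U))" for w
  have fX: "(f w, w) \<in> F \<and> f w \<in> U \<and> (\<forall>u. E (f w) u \<longrightarrow> u \<in> U)" if "w \<in> X" for w
  proof -
    have "\<exists>v. (v,w)\<in>F \<and> v \<in> U \<and> (\<forall>u. E v u \<longrightarrow> u \<in> U)"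
      using forcer[of w E B F s] that unfolding X_def U_def U'_def by blast
    then show ?thesis unfolding f_def by (rule someI_ex)
  qed
  have inj: "inj_on f X"
    by (rule inj_onI) (metis P1 fX)
  define Y where "Y = f ` X"
  have cardY: "card Y = card U' - card B"
    unfolding Y_def using card_image[OF inj] card_Diff_subset[OF finite_subset[OF BU(2) finU(2)] BU(2)]
    unfolding X_def by simp
  have YU: "Y \<subseteq> U" unfolding Y_def using fX by blast
  show ?thesis
  proof (cases "X = {}")
    case True
    then have "U' \<subseteq> U" using BU unfolding X_def by blast
    then have "card U' \<le> card U" using finU card_mono by blast
    then show ?thesis unfolding U_def U'_def by simp
  next
    case False
    then obtain y where yY: "y \<in> Y" unfolding Y_def by blast
    obtain x where xV: "x \<in> V" "x \<notin> U" using ne UV unfolding U_def by blast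
    define S where "S = U - Y"
    have SV: "S \<subseteq> V" using UV unfolding S_def by blast
    have nc: "\<not> connected_on E (V - S)"
    proof
      assume c: "connected_on E (V - S)"
      have yS: "y \<in> V - S" using yY YU UV unfolding S_def by blast
      have xS: "x \<in> V - S" using xV unfolding S_def by blast
      let ?R = "\<lambda>a b. E a b \<and> a \<in> V - S \<and> b \<in> V - S"
      have r: "?R\<^sup>*\<^sup>* y x" using c yS xS unfolding connected_on_def by blast
      have "z \<in> Y" if "?R\<^sup>*\<^sup>* y z" for z
        using that
      proof (induction rule: rtranclp_induct)
        case base
        then show ?case using yY .
      next
        case (step z z')
        then obtain w where "w \<in> X" "z = f w" unfolding Y_def by blast
        then have "z' \<in> U" using fX step by blast
        then show ?case using step unfolding S_def by blast
      qed
      then show False using r xV YU by blast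
    qed
    have k: "vertex_connectivity V E \<le> card S" using kappa_le[OF fin SV] nc by blast
    have cS: "card S = card U - card Y" unfolding S_def
      using card_Diff_subset[OF finite_subset[OF YU finU(1)] YU] .
    have "card Y \<le> card U" using card_mono[OF finU(1) YU] .
    have "card B \<le> card U'" using card_mono[OF finU(2) BU(2)] .
    show ?thesis using k cS cardY \<open>card Y \<le> card U\<close> \<open>card B \<le> card U'\<close>
      unfolding U_def U'_def by linarith
  qed
qed

lemma iter_bound:
  assumes fin: "finite V" and BV: "B \<subseteq> V"
    and P2: "\<And>v w. (v,w)\<in>F \<Longrightarrow> w \<in> V \<and> w \<notin> B"
    and P1: "\<And>v w w'. (v,w)\<in>F \<Longrightarrow> (v,w')\<in>F \<Longrightarrow> w = w'"
  shows "(\<forall>s<t. hop_rounds E B F s \<noteq> V) \<Longrightarrow>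
     card (hop_rounds E B F t) \<le> card B + t * (card B - vertex_connectivity V E)"
proof (induction t)
  case 0
  then show ?case by simp
next
  case (Suc t)
  then have h1: "card (hop_rounds E B F t) \<le> card B + t * (card B - vertex_connectivity V E)" by simp
  have "hop_rounds E B F t \<noteq> V" using Suc.prems by simp
  then have h2: "card (hop_rounds E B F (Suc t)) \<le> card (hop_rounds E B F t) + (card B - vertex_connectivity V E)"
    using step_bound[where E=E and s=t and V=V and B=B and F=F] fin BV P2 P1 by blast
  show ?case using h1 h2 by simp
qed


lemma two_sqrt_le: "0 \<le> x \<Longrightarrow> 2 * sqrt x \<le> x + 1"
proof -
  assume x: "0 \<le> x"
  have "0 \<le> (sqrt x - 1)^2" by simp
  also have "\<dots> = x - 2 * sqrt x + 1" using x by (simp add: power2_diff)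
  finally show ?thesis by simp
qed

lemma amgm_sqrt: "0 \<le> x \<Longrightarrow> 0 \<le> y \<Longrightarrow> 2 * sqrt (x * y) \<le> x + y"
proof -
  assume x: "0 \<le> x" and y: "0 \<le> y"
  have "0 \<le> (sqrt x - sqrt y)^2" by simp
  also have "\<dots> = x - 2 * sqrt (x*y) + y" using x y by (simp add: power2_diff real_sqrt_mult)
  finally show ?thesis by simp
qed

lemma lower_arith:
  fixes n k b T :: nat
  assumes bn: "b \<le> n" and kn: "k \<le> n" and nb: "n \<le> b + T * (b - k)"
  shows "nat \<lceil>2 * sqrt (real n - real k) + real k - 1\<rceil> \<le> b + T"
proof -
  have key: "2 * sqrt (real n - real k) + real k - 1 \<le> real (b + T)"
  proof (cases "b \<le> k")
    case True
    then have "n = b" using bn nb by simp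
    have "2 * sqrt (real n - real k) \<le> (real n - real k) + 1"
      using kn by (intro two_sqrt_le) simp
    then show ?thesis using \<open>n = b\<close> by simp
  next
    case False
    define \<beta> where "\<beta> = b - k"
    have b: "real b = real k + real \<beta>" using False unfolding \<beta>_def by simp
    have "real n \<le> real b + real T * real \<beta>" using nb unfolding \<beta>_def
      by (metis of_nat_add of_nat_le_iff of_nat_mult)
    then have "real n - real k \<le> real \<beta> * (real T + 1)" using b by (simp add: algebra_simps)
    then have s1: "sqrt (real n - real k) \<le> sqrt (real \<beta> * (real T + 1))" by (rule real_sqrt_le_mono)
    have s2: "2 * sqrt (real \<beta> * (real T + 1)) \<le> real \<beta> + (real T + 1)"
      by (rule amgm_sqrt) auto
    show ?thesis using b s1 s2 by linarith
  qed
  have "\<lceil>2 * sqrt (real n - real k) + real k - 1\<rceil> \<le> int (b + T)"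
    unfolding ceiling_le_iff using key by simp
  then show ?thesis by simp
qed

lemma enat_INF_helper:
  assumes "\<And>x. x \<in> X \<Longrightarrow> enat L \<le> enat b + g x"
  shows "enat L \<le> enat b + (INF x\<in>X. g x)"
proof -
  have "enat (L - b) \<le> (INF x\<in>X. g x)"
  proof (rule INF_greatest)
    fix x assume "x \<in> X"
    then have h: "enat L \<le> enat b + g x" by (rule assms)
    show "enat (L - b) \<le> g x"
    proof (cases "g x")
      case (enat m)
      then show ?thesis using h by simp
    next
      case infinity
      then show ?thesis by simp
    qed
  qed
  then have "enat b + enat (L - b) \<le> enat b + (INF x\<in>X. g x)" by (rule add_left_mono)
  moreover have "enat L \<le> enat b + enat (L - b)" by simp
  ultimately show ?thesis by (rule order_trans[rotated])
qed

lemma kappa_le_n: "finite V \<Longrightarrow> vertex_connectivity V E \<le> card V"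
  using kappa_le[of V V E] by simp

lemma pt_lower:
  assumes sg: "simple_graph V E" and BV: "B \<subseteq> V"
  shows "enat (nat \<lceil>2 * sqrt (real (card V) - real (vertex_connectivity V E))
                       + real (vertex_connectivity V E) - 1\<rceil>) \<le> enat (card B) + pt_H V E B"
proof -
  have fin: "finite V" using sg unfolding simple_graph_def by blast
  let ?L = "nat \<lceil>2 * sqrt (real (card V) - real (vertex_connectivity V E))
                       + real (vertex_connectivity V E) - 1\<rceil>"
  show ?thesis
  proof (cases "hopping_forcing_set V E B")
    case False
    then show ?thesis unfolding pt_H_def by simp
  next
    case True
    have "enat ?L \<le> enat (card B) + (INF F\<in>{F. set_of_forces V E B F}. pt_H_forces V E B F)"
    proof (rule enat_INF_helper)
      fix F assume "F \<in> {F. set_of_forces V E B F}"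
      then have sof: "set_of_forces V E B F" by simp
      note P2 = sof_props1[OF sof] and P1 = sof_props2[OF sof]
      show "enat ?L \<le> enat (card B) + pt_H_forces V E B F"
      proof (cases "\<exists>t. hop_rounds E B F t = V")
        case False
        then show ?thesis unfolding pt_H_forces_def by simp
      next
        case True
        define T where "T = (LEAST t. hop_rounds E B F t = V)"
        have UT: "hop_rounds E B F T = V" unfolding T_def using True by (rule LeastI_ex)
        have ne: "\<forall>s<T. hop_rounds E B F s \<noteq> V" unfolding T_def using not_less_Least by blast
        have "card V \<le> card B + T * (card B - vertex_connectivity V E)"
          using iter_bound[OF fin BV P2 P1 ne] UT by simp
        moreover have "card B \<le> card V" using card_mono[OF fin BV] .
        ultimately have "?L \<le> card B + T"
          using lower_arith kappa_le_n[OF fin] by blast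
        then show ?thesis unfolding pt_H_forces_def T_def[symmetric] using True by simp
      qed
    qed
    then show ?thesis unfolding pt_H_def using True by simp
  qed
qed


lemma choose_bq:
  fixes a :: nat
  assumes "1 \<le> a"
  shows "\<exists>b q. 1 \<le> b \<and> b \<le> a \<and> 1 \<le> q \<and> a \<le> b * q \<and> b + q \<le> nat \<lceil>2 * sqrt (real a)\<rceil>"
proof -
  define s where "s = nat \<lfloor>sqrt (real a)\<rfloor>"
  have sq: "real s \<le> sqrt (real a)" "sqrt (real a) < real s + 1"
    unfolding s_def by (simp_all add: of_nat_floor) linarith?
  have s2: "s * s \<le> a"
  proof -
    have "real s * real s \<le> sqrt (real a) * sqrt (real a)" using sq(1) by (intro mult_mono) auto
    then have "real (s * s) \<le> real a" by simp
    then show ?thesis by linarith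
  qed
  have s3: "a < (s+1) * (s+1)"
  proof -
    have "sqrt (real a) * sqrt (real a) < (real s + 1) * (real s + 1)" using sq(2)
      by (intro mult_strict_mono) auto
    moreover have "(real s + 1) * (real s + 1) = real ((s+1)*(s+1))" by (simp add: algebra_simps)
    moreover have "sqrt (real a) * sqrt (real a) = real a" by simp
    ultimately have "real a < real ((s+1)*(s+1))" by linarith
    then show ?thesis by (simp only: of_nat_less_iff)
  qed
  have s1: "1 \<le> s" using s3 assms by (cases s) auto
  show ?thesis
  proof (cases "a = s * s")
    case True
    have "real (s + s) \<le> 2 * sqrt (real a)" using sq(1) by simp
    then have "s + s \<le> nat \<lceil>2 * sqrt (real a)\<rceil>" by linarith
    then show ?thesis using True s1 by (intro exI[of _ s]) (auto intro: le_square)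
  next
    case False
    then have lt: "s * s < a" using s2 by simp
    have "real s < sqrt (real a)"
    proof (rule ccontr)
      assume "\<not> real s < sqrt (real a)"
      then have "sqrt (real a) = real s" using sq(1) by simp
      then have "(sqrt (real a))^2 = (real s)^2" by simp
      then have "real a = real s * real s" by (simp add: power2_eq_square)
      then show False using lt by (metis of_nat_eq_iff of_nat_mult less_irrefl)
    qed
    then have c1: "2 * s + 1 \<le> nat \<lceil>2 * sqrt (real a)\<rceil>" by linarith
    show ?thesis
    proof (cases "a \<le> s * s + s")
      case True
      have "s \<le> s * s" using s1 by simp
      then have sa: "s \<le> a" using s2 by linarith
      have "1 \<le> s \<and> s \<le> a \<and> 1 \<le> s+1 \<and> a \<le> s*(s+1) \<and> s + (s+1) \<le> nat \<lceil>2 * sqrt (real a)\<rceil>"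
        using True c1 s1 s2 sa by (simp add: algebra_simps)
      then show ?thesis by blast
    next
      case False
      then have "4 * s * s + 4 * s + 1 < 4 * a" by simp
      then have "real ((2*s+1)*(2*s+1)) < real (4 * a)" by (simp only: of_nat_less_iff) (simp add: algebra_simps)
      moreover have "(2 * sqrt (real a))^2 = real (4 * a)" by (simp add: power_mult_distrib)
      moreover have "(2 * real s + 1)^2 = real ((2*s+1)*(2*s+1))" by (simp add: power2_eq_square algebra_simps)
      ultimately have "(2 * real s + 1)^2 < (2 * sqrt (real a))^2" by simp
      then have "2 * real s + 1 < 2 * sqrt (real a)"
        by (rule power2_less_imp_less) simp
      then have "2 * s + 2 \<le> nat \<lceil>2 * sqrt (real a)\<rceil>" by linarith
      then show ?thesis using False s3 by (intro exI[of _ "s+1"] exI[of _ "s+1"]) (auto simp: algebra_simps)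
    qed
  qed
qed


lemma upper:
  assumes sg: "simple_graph V E"
  shows "\<exists>B\<subseteq>V. enat (card B) + pt_H V E B \<le>
     enat (card V - independence_number V E + nat \<lceil>2 * sqrt (real (independence_number V E))\<rceil> - 1)"
proof -
  have fin: "finite V" and Vne: "V \<noteq> {}" and irr: "\<forall>a. \<not> E a a"
    and EV: "\<forall>a b. E a b \<longrightarrow> a \<in> V \<and> b \<in> V"
    using sg unfolding simple_graph_def by blast+
  define a where "a = independence_number V E"
  define A where "A = {card I | I. independent_set V E I}"
  have finA: "finite A" unfolding A_def independent_set_def
    by (rule finite_subset[of _ "card ` Pow V"]) (auto simp: fin)
  have "0 \<in> A" unfolding A_def independent_set_def by force
  then have "a \<in> A" unfolding a_def independence_number_def A_def[symmetric] using finA Max_in by blast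
  then obtain I where indI: "independent_set V E I" and cI: "card I = a" unfolding A_def by blast
  obtain x0 where "x0 \<in> V" using Vne by blast
  then have "1 \<in> A" unfolding A_def independent_set_def using irr
    by (auto intro!: exI[of _ "{x0}"])
  then have a1: "1 \<le> a" unfolding a_def independence_number_def A_def[symmetric] using finA Max_ge by blast
  have IV: "I \<subseteq> V" and Iind: "\<forall>x\<in>I. \<forall>y\<in>I. \<not> E x y" using indI unfolding independent_set_def by auto
  have finI: "finite I" using finite_subset[OF IV fin] .
  obtain xs where sxs: "set xs = I" and dxs: "distinct xs" using finite_distinct_list[OF finI] by blast
  have lxs: "length xs = a" using distinct_card[OF dxs] sxs cI by simp
  have xsI: "xs!i \<in> I" if "i < a" for i using that sxs lxs nth_mem by blast
  obtain b q where bq: "1 \<le> b" "b \<le> a" "1 \<le> q" "a \<le> b*q" "b + q \<le> nat \<lceil>2 * sqrt (real a)\<rceil>"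
    using choose_bq[OF a1] by blast
  define C where "C = V - I"
  define P where "P m = (\<lambda>i. xs!i) ` {..<m}" for m
  have Pmem: "xs!i \<in> P m \<longleftrightarrow> i < m" if "i < a" "m \<le> a" for i m
  proof
    assume "xs!i \<in> P m"
    then obtain i' where "i' < m" "xs!i = xs!i'" unfolding P_def by blast
    then have "i = i'" using nth_eq_iff_index_eq[OF dxs] that lxs by simp
    then show "i < m" using \<open>i' < m\<close> by simp
  qed (auto simp: P_def)
  have Pa: "P a = I" unfolding P_def using sxs lxs by (auto simp: set_conv_nth)
  have PI: "P m \<subseteq> I" if "m \<le> a" for m using that xsI unfolding P_def by auto
  have PSuc: "P (Suc m) = insert (xs!m) (P m)" for m unfolding P_def by (simp add: lessThan_Suc)
  have cardP: "card (P b) = b"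
  proof -
    have "inj_on (\<lambda>i. xs!i) {..<b}"
      by (rule inj_onI) (use nth_eq_iff_index_eq[OF dxs] lxs bq(2) in auto)
    then show ?thesis unfolding P_def by (simp add: card_image)
  qed
  have V_eq: "V = C \<union> I" using IV unfolding C_def by blast
  have nbr: "u \<in> C" if "E x u" "x \<in> I" for x u using that EV Iind unfolding C_def by blast
  define g where "g i = (xs!i, xs!(i+b))" for i
  define fs where "fs = map g [0..<a-b]"
  have chron: "hop_chron V E (C \<union> P (b+j)) (P j) (map g [j..<a-b])" if "j \<le> a - b" for j
    using that
  proof (induction "a - b - j" arbitrary: j)
    case 0
    then have j: "j = a - b" by simp
    then have "b + j = a" using bq by simp
    then have "C \<union> P (b+j) = V" using Pa V_eq by simp
    then show ?case using j by (simp add: hop_can_force_def)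
  next
    case (Suc d)
    then have j: "j < a - b" by simp
    have up: "[j..<a-b] = j # [Suc j..<a-b]" using j by (simp add: upt_conv_Cons)
    have IH: "hop_chron V E (C \<union> P (b + Suc j)) (P (Suc j)) (map g [Suc j..<a-b])"
      using Suc.hyps(1)[of "Suc j"] Suc.hyps(2) j by simp
    have ja: "j < a" "j + b < a" using j by auto
    have f1: "xs!j \<in> C \<union> P (b+j)" using Pmem[of j "b+j"] ja bq(1) j by simp
    have f2: "xs!j \<notin> P j" using Pmem[of j j] ja by simp
    have f3: "\<forall>u. E (xs!j) u \<longrightarrow> u \<in> C \<union> P (b+j)" using nbr xsI ja by blast
    have f4: "xs!(j+b) \<in> V" using IV xsI ja by blast
    have f5: "xs!(j+b) \<notin> C \<union> P (b+j)" using Pmem[of "j+b" "b+j"] ja j xsI unfolding C_def by auto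
    have e1: "insert (xs!(j+b)) (C \<union> P (b+j)) = C \<union> P (b + Suc j)"
      using PSuc[of "b+j"] by (simp add: add.commute)
    have e2: "insert (xs!j) (P j) = P (Suc j)" using PSuc by simp
    show ?case unfolding up using f1 f2 f3 f4 f5 IH e1 e2 by (simp add: g_def hop_can_force_def)
  qed
  define B0 where "B0 = C \<union> P b"
  have P0: "P 0 = {}" unfolding P_def by simp
  have fs0: "hop_chron V E B0 {} fs" using chron[of 0] P0 unfolding fs_def B0_def by simp
  have B0V: "B0 \<subseteq> V" using PI[OF bq(2)] IV unfolding B0_def C_def by blast
  have Fmem: "(xs!i, xs!(i+b)) \<in> set fs" if "i < a - b" for i using that unfolding fs_def g_def by auto
  have sndfs: "snd ` set fs \<subseteq> V" unfolding fs_def g_def using xsI IV by auto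
  have cov: "B0 \<union> snd ` set fs = V"
  proof
    show "B0 \<union> snd ` set fs \<subseteq> V" using B0V sndfs by blast
    show "V \<subseteq> B0 \<union> snd ` set fs"
    proof
      fix v assume "v \<in> V"
      show "v \<in> B0 \<union> snd ` set fs"
      proof (cases "v \<in> C")
        case True then show ?thesis unfolding B0_def by blast
      next
        case False
        then have "v \<in> I" using \<open>v \<in> V\<close> V_eq by blast
        then obtain i where i: "i < a" "v = xs!i" using sxs lxs by (auto simp: in_set_conv_nth)
        show ?thesis
        proof (cases "i < b")
          case True then show ?thesis using Pmem[of i b] i bq unfolding B0_def by auto
        next
          case False
          then have "(xs!(i-b), xs!(i-b+b)) \<in> set fs" using Fmem[of "i-b"] i by simp
          then have "v \<in> snd ` set fs" using i False by force
          then show ?thesis by blast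
        qed
      qed
    qed
  qed
  have hfs: "hopping_forcing_set V E B0"
    unfolding hopping_forcing_set_def chron_list_of_forces_def using B0V fs0 cov by blast
  have sof: "set_of_forces V E B0 (set fs)"
    unfolding set_of_forces_def chron_list_of_forces_def using fs0 by blast
  let ?U = "hop_rounds E B0 (set fs)"
  have rounds: "C \<union> P (min a (b*(t+1))) \<subseteq> ?U t" for t
  proof (induction t)
    case 0
    then show ?case using bq unfolding B0_def by (simp add: min_def)
  next
    case (Suc t)
    have mono: "?U t \<subseteq> ?U (Suc t)" by auto
    show ?case
    proof
      fix v assume v: "v \<in> C \<union> P (min a (b*(Suc t+1)))"
      show "v \<in> ?U (Suc t)"
      proof (cases "v \<in> C")
        case True then show ?thesis using Suc mono by blast
      next
        case False
        then obtain i where i: "i < min a (b*(Suc t+1))" "v = xs!i" using v unfolding P_def by blast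
        show ?thesis
        proof (cases "i < b*(t+1)")
          case True
          then have "v \<in> P (min a (b*(t+1)))" using Pmem[of i "min a (b*(t+1))"] i by simp
          then show ?thesis using Suc mono by blast
        next
          case False
          define j where "j = i - b"
          have ij: "i = j + b" "j < a - b" "j < b*(t+1)" "j < a"
            using False i bq(1) unfolding j_def by (auto simp: algebra_simps)
          have "xs!j \<in> P (min a (b*(t+1)))" using Pmem[of j "min a (b*(t+1))"] ij by simp
          then have jU: "xs!j \<in> ?U t" using Suc by blast
          have jN: "\<forall>u. E (xs!j) u \<longrightarrow> u \<in> ?U t" using nbr xsI ij Suc by blast
          have jF: "(xs!j, v) \<in> set fs" using Fmem[of j] ij i by simp
          show ?thesis using jU jN jF by auto
        qed
      qed
    qed
  qed
  define T where "T = q - 1"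
  have "min a (b*(T+1)) = a" using bq unfolding T_def by simp
  then have "V \<subseteq> ?U T" using rounds[of T] Pa V_eq by simp
  moreover have "?U T \<subseteq> V" using rounds_sub[OF B0V] sof_props1[OF sof] by blast
  ultimately have UT: "?U T = V" by blast
  have "pt_H_forces V E B0 (set fs) \<le> enat T"
    unfolding pt_H_forces_def using UT by (auto intro: Least_le)
  moreover have "pt_H V E B0 \<le> pt_H_forces V E B0 (set fs)"
    unfolding pt_H_def using hfs sof by (auto intro: INF_lower)
  ultimately have pt: "pt_H V E B0 \<le> enat T" by simp
  have cC: "card C = card V - a" unfolding C_def using card_Diff_subset[OF finI IV] cI by simp
  have cB: "card B0 = card V - a + b"
  proof -
    have "C \<inter> P b = {}" using PI[OF bq(2)] unfolding C_def by blast
    then show ?thesis unfolding B0_def using card_Un_disjoint[of C "P b"] fin finI cC cardP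
      unfolding C_def by (simp add: finite_subset[OF PI[OF bq(2)] finI])
  qed
  have aV: "a \<le> card V" using card_mono[OF fin IV] cI by simp
  have "enat (card B0) + pt_H V E B0 \<le> enat (card B0) + enat T" using pt by (rule add_left_mono)
  also have "\<dots> = enat (card V - a + b + (q - 1))" using cB unfolding T_def by simp
  also have "\<dots> \<le> enat (card V - a + nat \<lceil>2 * sqrt (real a)\<rceil> - 1)" using bq by simp
  finally show ?thesis using B0V unfolding a_def by blast
qed


theorem lemma3p11:
  fixes V :: "'a set" and E :: "'a \<Rightarrow> 'a \<Rightarrow> bool"
  assumes "simple_graph V E"
    and "vertex_connectivity V E + independence_number V E = card V"
  shows "th_H V E =
           enat (nat \<lceil>2 * sqrt (real (card V) - real (vertex_connectivity V E))
                       + real (vertex_connectivity V E) - 1\<rceil>)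
       \<and> th_H V E =
           enat (nat \<lceil>real (card V) - real (independence_number V E)
                       + 2 * sqrt (real (independence_number V E)) - 1\<rceil>)"
proof -
  define n where "n = card V"
  define k where "k = vertex_connectivity V E"
  define a where "a = independence_number V E"
  have nka: "k + a = n" using assms(2) unfolding n_def k_def a_def .
  define L1 where "L1 = nat \<lceil>2 * sqrt (real n - real k) + real k - 1\<rceil>"
  define L2 where "L2 = nat \<lceil>real n - real a + 2 * sqrt (real a) - 1\<rceil>"
  have rk: "real k = real n - real a" using nka by linarith
  have "real n - real k = real a" using rk by simp
  then have "2 * sqrt (real n - real k) + real k - 1 = real n - real a + 2 * sqrt (real a) - 1"
    using rk by simp
  then have L12: "L1 = L2" unfolding L1_def L2_def by (simp only:)
  have lo: "enat L1 \<le> th_H V E"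
    unfolding th_H_def L1_def n_def k_def
    by (rule INF_greatest) (use pt_lower[OF assms(1)] in auto)
  obtain B where BV: "B \<subseteq> V" and Bc: "enat (card B) + pt_H V E B \<le>
     enat (n - a + nat \<lceil>2 * sqrt (real a)\<rceil> - 1)"
    using upper[OF assms(1)] unfolding n_def a_def by blast
  have "real n - real a + 2 * sqrt (real a) - 1 = 2 * sqrt (real a) + of_int (int (n - a) - 1)"
    using nka by simp
  then have "\<lceil>real n - real a + 2 * sqrt (real a) - 1\<rceil> = \<lceil>2 * sqrt (real a)\<rceil> + (int (n - a) - 1)"
    by (simp only: ceiling_add_of_int)
  moreover have "0 \<le> \<lceil>2 * sqrt (real a)\<rceil>"
  proof -
    have "0 \<le> sqrt (real a)" by simp
    then have "-1 < 2 * sqrt (real a)" by linarith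
    then show ?thesis by simp
  qed
  ultimately have "L2 = n - a + nat \<lceil>2 * sqrt (real a)\<rceil> - 1"
    unfolding L2_def by linarith
  then have "th_H V E \<le> enat L2"
    unfolding th_H_def using BV Bc by (auto intro: INF_lower2)
  then have "th_H V E = enat L1" using lo L12 by simp
  then show ?thesis using L12 unfolding L1_def L2_def n_def k_def a_def by simp
qed

end
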